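(* Let $d\ge1$ and let $\rho$ be a finite intensity on $\Omega=B^d_+\times B^d_+$ with total mass $\Lambda>0$ such that $\mu=\rho/\Lambda$ is absolutely continuous with respect to Lebesgue measure on $\mathbb{R}^{2d}$, and assume that neither the green marginal nor the red marginal of $\mu$ (on $\mathbb{R}^d$) is supported on a proper linear subspace of $\mathbb{R}^d$. Then for every measurable map $\phi:[0,1]\to\Omega$ with $\phi_*(\mathrm{Uniform}[0,1])=\mu$, the pullback kernel $W_\phi(u,v)=K(\phi(u),\phi(v))$ on $[0,1]^2$ is not sectionally of bounded variation.
   Context: $B^d_+=\{x\in\mathbb{R}^d:x_k\ge0\ \forall k,\ \|x\|\le1\}$, $\Omega=B^d_+\times B^d_+$; a point $s\in\Omega$ is written $s=(\vec g_s,\vec r_s)$ and $K(s,t)=\vec g_s\cdot\vec r_t$. The green (resp. red) marginal of $\mu$ is its pushforward under $s\mapsto\vec g_s$ (resp. $s\mapsto \vec r_s$). A function $f:[0,1]\to\mathbb{R}$ is in $\mathrm{BV}([0,1])$ if $\sup\sum_{i=1}^k|f(t_i)-f(t_{i-1})|<\infty$ over all partitions $0=t_0<\dots<t_k=1$. A kernel $W:[0,1]^2\to\mathbb{R}$ is sectionally of bounded variation if for almost every $v\in[0,1]$ the function $u\mapsto W(u,v)$ is in $\mathrm{BV}([0,1])$ and for almost every $u\in[0,1]$ the function $v\mapsto W(u,v)$ is in $\mathrm{BV}([0,1])$. *)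

theory Defs
  imports "HOL-Analysis.Analysis"
begin

definition pos_ball :: "(real^'n) set" where
  "pos_ball = {x. (\<forall>k. 0 \<le> x $ k) \<and> norm x \<le> 1}"

text \<open>Omega = B^d_+ x B^d_+; a point s is the pair (green vector, red vector).\<close>
definition Omega :: "((real^'n) \<times> (real^'n)) set" where
  "Omega = pos_ball \<times> pos_ball"

definition K :: "(real^'n) \<times> (real^'n) \<Rightarrow> (real^'n) \<times> (real^'n) \<Rightarrow> real" where
  "K s t = fst s \<bullet> snd t"

definition BV01 :: "(real \<Rightarrow> real) \<Rightarrow> bool" where
  "BV01 f \<longleftrightarrow> (\<exists>B. \<forall>(k::nat) (t::nat \<Rightarrow> real).
      t 0 = 0 \<and> t k = 1 \<and> (\<forall>i<k. t i < t (Suc i)) \<longrightarrow>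
      (\<Sum>i\<in>{1..k}. \<bar>f (t i) - f (t (i - 1))\<bar>) \<le> B)"

definition sectionally_BV :: "(real \<Rightarrow> real \<Rightarrow> real) \<Rightarrow> bool" where
  "sectionally_BV W \<longleftrightarrow>
     (AE v in lebesgue. v \<in> {0..1} \<longrightarrow> BV01 (\<lambda>u. W u v)) \<and>
     (AE u in lebesgue. u \<in> {0..1} \<longrightarrow> BV01 (\<lambda>v. W u v))"

definition unif01 :: "real measure" where
  "unif01 = uniform_measure (restrict_space lebesgue {0..1}) {0..1}"

definition supported_on :: "'a measure \<Rightarrow> 'a set \<Rightarrow> bool" where
  "supported_on M V \<longleftrightarrow> emeasure M (space M - V) = 0"

end

theory Submission
  imports Defs
begin


definition partn :: "nat \<Rightarrow> (nat \<Rightarrow> real) \<Rightarrow> real \<Rightarrow> bool" where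
  "partn k t s \<longleftrightarrow> t 0 = 0 \<and> t k = s \<and> (\<forall>i<k. t i < t (Suc i))"

definition vsum :: "(real \<Rightarrow> real) \<Rightarrow> nat \<Rightarrow> (nat \<Rightarrow> real) \<Rightarrow> real" where
  "vsum f k t = (\<Sum>i\<in>{1..k}. \<bar>f (t i) - f (t (i - 1))\<bar>)"

definition PS :: "(real \<Rightarrow> real) \<Rightarrow> real \<Rightarrow> real set" where
  "PS f s = {vsum f k t | k t. partn k t s}"

definition Var :: "(real \<Rightarrow> real) \<Rightarrow> real \<Rightarrow> real" where
  "Var f s = Sup (PS f s)"

lemma BV01_alt: "BV01 f \<longleftrightarrow> (\<exists>B. \<forall>k t. partn k t 1 \<longrightarrow> vsum f k t \<le> B)"
  unfolding BV01_def partn_def vsum_def by blast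

lemma vsum_nonneg: "0 \<le> vsum f k t"
  unfolding vsum_def by (auto intro: sum_nonneg)

lemma partn_ext:
  assumes "partn k t s" "s < r"
  shows "partn (Suc k) (t(Suc k := r)) r"
    and "vsum f (Suc k) (t(Suc k := r)) = vsum f k t + \<bar>f r - f s\<bar>"
proof -
  show "partn (Suc k) (t(Suc k := r)) r"
    using assms unfolding partn_def by (auto simp: less_Suc_eq)
  have "vsum f (Suc k) (t(Suc k := r)) = (\<Sum>i\<in>{1..k}. \<bar>f ((t(Suc k := r)) i) - f ((t(Suc k := r)) (i - 1))\<bar>) + \<bar>f r - f (t k)\<bar>"
    unfolding vsum_def by (simp add: sum.atLeast1_atMost_eq)
  also have "(\<Sum>i\<in>{1..k}. \<bar>f ((t(Suc k := r)) i) - f ((t(Suc k := r)) (i - 1))\<bar>) = vsum f k t"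
    unfolding vsum_def by (rule sum.cong) auto
  finally show "vsum f (Suc k) (t(Suc k := r)) = vsum f k t + \<bar>f r - f s\<bar>"
    using assms unfolding partn_def by (simp only:)
qed

lemma PS_nonempty: assumes "0 \<le> s" shows "PS f s \<noteq> {}"
proof (cases "s = 0")
  case True
  have "partn 0 (\<lambda>_. 0) s" using True by (simp add: partn_def)
  then show ?thesis unfolding PS_def by blast
next
  case False
  have "partn 0 (\<lambda>_. 0) 0" by (simp add: partn_def)
  from partn_ext(1)[OF this, of s] False assms show ?thesis unfolding PS_def by force
qed

lemma PS_bdd:
  assumes "BV01 f" "s \<le> 1"
  shows "\<exists>B. \<forall>x\<in>PS f s. x \<le> B"
proof -
  obtain B where B: "\<And>k t. partn k t 1 \<Longrightarrow> vsum f k t \<le> B" using assms(1) BV01_alt by blast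
  have "x \<le> B" if "x \<in> PS f s" for x
  proof -
    obtain k t where x: "x = vsum f k t" and p: "partn k t s" using \<open>x \<in> PS f s\<close> PS_def by auto
    show ?thesis
    proof (cases "s = 1")
      case True then show ?thesis using B p x by auto
    next
      case False
      then have "s < 1" using assms by simp
      from partn_ext(1)[OF p this] partn_ext(2)[OF p this, of f] B[of "Suc k"] x vsum_nonneg show ?thesis by force
    qed
  qed
  then show ?thesis by blast
qed

lemma Var_step:
  assumes "BV01 f" "0 \<le> s" "s < r" "r \<le> 1"
  shows "Var f s + \<bar>f r - f s\<bar> \<le> Var f r"
proof -
  have bdd: "bdd_above (PS f r)" using PS_bdd[OF assms(1,4)] by (auto simp: bdd_above_def)
  have "Var f s \<le> Var f r - \<bar>f r - f s\<bar>"
    unfolding Var_def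
  proof (rule cSup_least)
    show "PS f s \<noteq> {}" using PS_nonempty assms by auto
    fix x assume "x \<in> PS f s"
    then obtain k t where x: "x = vsum f k t" and p: "partn k t s" using PS_def by auto
    have "x + \<bar>f r - f s\<bar> \<in> PS f r" using partn_ext(1)[OF p assms(3)] partn_ext(2)[OF p assms(3), of f] x unfolding PS_def by force
    then have "x + \<bar>f r - f s\<bar> \<le> Sup (PS f r)" using bdd by (rule cSup_upper)
    then show "x \<le> Sup (PS f r) - \<bar>f r - f s\<bar>" by simp
  qed
  then show ?thesis by simp
qed

lemma BV_image_negligible:
  fixes \<phi> :: "real \<Rightarrow> 'a::euclidean_space"
  assumes dim: "2 \<le> DIM('a)" and bv: "\<forall>b\<in>Basis. BV01 (\<lambda>u. \<phi> u \<bullet> b)"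
  shows "negligible (\<phi> ` {0..1})"
proof -
  define V where "V t = (\<Sum>b\<in>Basis. Var (\<lambda>u. \<phi> u \<bullet> b) t)" for t
  have lip0: "norm (\<phi> t - \<phi> s) \<le> V t - V s" if "0 \<le> s" "s < t" "t \<le> 1" for s t
  proof -
    have "norm (\<phi> t - \<phi> s) \<le> (\<Sum>b\<in>Basis. \<bar>(\<phi> t - \<phi> s) \<bullet> b\<bar>)" by (rule norm_le_l1)
    also have "\<dots> \<le> (\<Sum>b\<in>Basis. Var (\<lambda>u. \<phi> u \<bullet> b) t - Var (\<lambda>u. \<phi> u \<bullet> b) s)"
    proof (rule sum_mono)
      fix b :: 'a assume "b \<in> Basis"
      from Var_step[OF bv[rule_format, OF this] that]
      show "\<bar>(\<phi> t - \<phi> s) \<bullet> b\<bar> \<le> Var (\<lambda>u. \<phi> u \<bullet> b) t - Var (\<lambda>u. \<phi> u \<bullet> b) s"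
        by (simp add: inner_diff_left)
    qed
    also have "\<dots> = V t - V s" unfolding V_def by (simp add: sum_subtractf)
    finally show ?thesis .
  qed
  have lip: "norm (\<phi> t - \<phi> s) \<le> \<bar>V t - V s\<bar>" if "s \<in> {0..1}" "t \<in> {0..1}" for s t
  proof -
    consider "s < t" | "s = t" | "t < s" by linarith
    then show ?thesis
    proof cases
      case 1 then show ?thesis using lip0[of s t] that by force
    next
      case 2 then show ?thesis by simp
    next
      case 3 then show ?thesis using lip0[of t s] that by (force simp: norm_minus_commute)
    qed
  qed
  define g where "g x = \<phi> (inv_into {0..1} V (fst x))" for x :: "real \<times> real"
  define S where "S = (\<lambda>t. (V t, 0::real)) ` {0..1}"
  have geq: "g (V t, 0) = \<phi> t" if "t \<in> {0..1}" for t
  proof -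
    have "inv_into {0..1} V (V t) \<in> {0..1}" "V (inv_into {0..1} V (V t)) = V t"
      using that inv_into_into[of "V t" V "{0..1}"] by (auto intro: f_inv_into_f)
    with lip[OF this(1) that] show ?thesis unfolding g_def by simp
  qed
  have img: "\<phi> ` {0..1} = g ` S"
    unfolding S_def image_image using geq by (auto simp: image_iff)
  have "S \<subseteq> {x. (0, 1) \<bullet> x = 0}" unfolding S_def by auto
  then have negS: "negligible S"
    by (rule negligible_subset[OF negligible_hyperplane, rotated]) (simp add: zero_prod_def)
  have "negligible (g ` S)"
  proof (rule negligible_locally_Lipschitz_image)
    show "DIM(real \<times> real) \<le> DIM('a)" using dim by simp
    show "negligible S" by (rule negS)
    fix x assume "x \<in> S"
    then obtain t where t: "t \<in> {0..1}" "x = (V t, 0)" unfolding S_def by auto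
    have "\<forall>y\<in>S \<inter> UNIV. norm (g y - g x) \<le> 1 * norm (y - x)"
    proof
      fix y assume "y \<in> S \<inter> UNIV"
      then obtain s where s: "s \<in> {0..1}" "y = (V s, 0)" unfolding S_def by auto
      have "norm (y - x) = \<bar>V s - V t\<bar>" using s t by (simp add: norm_Pair)
      then show "norm (g y - g x) \<le> 1 * norm (y - x)"
        using lip[OF t(1) s(1)] geq[OF s(1)] geq[OF t(1)] s t by simp
    qed
    then show "\<exists>T B. open T \<and> x \<in> T \<and> (\<forall>y\<in>S \<inter> T. norm (g y - g x) \<le> B * norm (y - x))"
      by blast
  qed
  then show ?thesis using img by simp
qed



lemma BV01_add: assumes "BV01 f" "BV01 g" shows "BV01 (\<lambda>x. f x + g x)"
proof -
  obtain B1 where B1: "\<And>k t. partn k t 1 \<Longrightarrow> vsum f k t \<le> B1" using assms(1) BV01_alt by blast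
  obtain B2 where B2: "\<And>k t. partn k t 1 \<Longrightarrow> vsum g k t \<le> B2" using assms(2) BV01_alt by blast
  have tri: "vsum (\<lambda>x. f x + g x) k t \<le> vsum f k t + vsum g k t" for k t
    unfolding vsum_def sum.distrib[symmetric] by (rule sum_mono) linarith
  show ?thesis unfolding BV01_alt
  proof (intro exI[of _ "B1 + B2"] allI impI)
    fix k t assume "partn k t 1"
    then show "vsum (\<lambda>x. f x + g x) k t \<le> B1 + B2"
      using B1[of k t] B2[of k t] tri[of k t] by linarith
  qed
qed

lemma BV01_cmult: assumes "BV01 f" shows "BV01 (\<lambda>x. c * f x)"
proof -
  obtain B1 where B1: "\<And>k t. partn k t 1 \<Longrightarrow> vsum f k t \<le> B1" using assms(1) BV01_alt by blast
  have sc: "vsum (\<lambda>x. c * f x) k t = \<bar>c\<bar> * vsum f k t" for k t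
    unfolding vsum_def sum_distrib_left by (rule sum.cong) (auto simp: abs_mult right_diff_distrib[symmetric])
  show ?thesis unfolding BV01_alt
  proof (intro exI[of _ "\<bar>c\<bar> * B1"] allI impI)
    fix k t assume "partn k t 1"
    then show "vsum (\<lambda>x. c * f x) k t \<le> \<bar>c\<bar> * B1"
      using B1[of k t] sc[of k t] by (simp add: mult_left_mono)
  qed
qed

lemma BV01_zero: "BV01 (\<lambda>x. 0)"
  unfolding BV01_alt vsum_def by auto

lemma BV_subspace1: "subspace {w. BV01 (\<lambda>u. F u \<bullet> w)}"
  unfolding subspace_def
proof (intro conjI ballI allI)
  show "0 \<in> {w. BV01 (\<lambda>u. F u \<bullet> w)}" using BV01_zero by simp
  fix x y assume "x \<in> {w. BV01 (\<lambda>u. F u \<bullet> w)}" "y \<in> {w. BV01 (\<lambda>u. F u \<bullet> w)}"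
  then show "x + y \<in> {w. BV01 (\<lambda>u. F u \<bullet> w)}"
    using BV01_add[of "\<lambda>u. F u \<bullet> x" "\<lambda>u. F u \<bullet> y"] by (simp add: inner_add_right)
next
  fix c :: real and x assume "x \<in> {w. BV01 (\<lambda>u. F u \<bullet> w)}"
  then show "c *\<^sub>R x \<in> {w. BV01 (\<lambda>u. F u \<bullet> w)}"
    using BV01_cmult[of "\<lambda>u. F u \<bullet> x" c] by simp
qed

lemma BV_subspace2: "subspace {w. BV01 (\<lambda>u. w \<bullet> F u)}"
  unfolding subspace_def
proof (intro conjI ballI allI)
  show "0 \<in> {w. BV01 (\<lambda>u. w \<bullet> F u)}" using BV01_zero by simp
  fix x y assume "x \<in> {w. BV01 (\<lambda>u. w \<bullet> F u)}" "y \<in> {w. BV01 (\<lambda>u. w \<bullet> F u)}"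
  then show "x + y \<in> {w. BV01 (\<lambda>u. w \<bullet> F u)}"
    using BV01_add[of "\<lambda>u. x \<bullet> F u" "\<lambda>u. y \<bullet> F u"] by (simp add: inner_add_left)
next
  fix c :: real and x assume "x \<in> {w. BV01 (\<lambda>u. w \<bullet> F u)}"
  then show "c *\<^sub>R x \<in> {w. BV01 (\<lambda>u. w \<bullet> F u)}"
    using BV01_cmult[of "\<lambda>u. x \<bullet> F u" c] by simp
qed

lemma null_from_AE:
  fixes \<phi> :: "real \<Rightarrow> 'a::euclidean_space"
  assumes phi: "\<phi> \<in> measurable (restrict_space lebesgue {0..1}) borel"
    and d: "distr unif01 borel \<phi> = \<mu>"
    and ae: "AE v in lebesgue. v \<in> {0..1} \<longrightarrow> Q v"
    and X: "X \<in> sets borel" and QX: "\<forall>v\<in>{0..1}. Q v \<longrightarrow> \<phi> v \<notin> X"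
  shows "emeasure \<mu> X = 0"
proof -
  let ?M = "restrict_space lebesgue {0..1::real}"
  have phi': "\<phi> \<in> measurable unif01 borel"
    using phi unfolding unif01_def
    by (subst measurable_cong_sets[OF sets_uniform_measure refl])
  have sp: "space unif01 = {0..1}" unfolding unif01_def by (simp add: space_restrict_space)
  define P where "P = \<phi> -` X \<inter> {0..1}"
  have PM: "P \<in> sets ?M" using measurable_sets[OF phi X] unfolding P_def by (simp add: space_restrict_space)
  then have PL: "P \<in> sets lebesgue" by (simp add: sets_restrict_space_iff)
  from ae obtain N where N1: "{x \<in> space lebesgue. \<not> (x \<in> {0..1} \<longrightarrow> Q x)} \<subseteq> N"
     and N2: "emeasure lebesgue N = 0" and N3: "N \<in> sets lebesgue"
    by (rule AE_E)
  have N: "{x \<in> space lebesgue. \<not> (x \<in> {0..1} \<longrightarrow> Q x)} \<subseteq> N" "N \<in> null_sets lebesgue"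
    using N1 N2 N3 by (auto intro: null_setsI)
  have "P \<subseteq> N" using N(1) QX unfolding P_def by auto
  then have P0: "emeasure lebesgue P = 0" using N(2) PL by (meson null_sets_subset null_setsD1)
  have "emeasure \<mu> X = emeasure unif01 P"
    using d[symmetric] emeasure_distr[OF phi' X] sp P_def by simp
  also have "\<dots> = emeasure ?M ({0..1} \<inter> P) / emeasure ?M {0..1}"
    unfolding unif01_def using PM by (subst emeasure_uniform_measure) (auto simp: space_restrict_space)
  also have "emeasure ?M ({0..1} \<inter> P) = 0"
    using P0 PL by (subst emeasure_restrict_space) (auto simp: P_def Int_absorb1)
  finally show ?thesis by simp
qed



theorem mainTheorem7:
  fixes \<rho> :: "((real^'n) \<times> (real^'n)) measure"
    and \<Lambda> :: real
    and \<mu> :: "((real^'n) \<times> (real^'n)) measure"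
  assumes sets_rho: "sets \<rho> = sets borel"
    and finite_rho: "finite_measure \<rho>"
    and rho_on_Omega: "emeasure \<rho> (UNIV - Omega) = 0"
    and Lambda_def: "\<Lambda> = measure \<rho> UNIV"
    and Lambda_pos: "\<Lambda> > 0"
    and mu_def: "\<mu> = scale_measure (ennreal (1 / \<Lambda>)) \<rho>"
    and abs_cont: "absolutely_continuous lborel \<mu>"
    and green_full: "\<forall>V. subspace V \<and> V \<noteq> UNIV \<longrightarrow> \<not> supported_on (distr \<mu> borel fst) V"
    and red_full: "\<forall>V. subspace V \<and> V \<noteq> UNIV \<longrightarrow> \<not> supported_on (distr \<mu> borel snd) V"
  shows "\<forall>\<phi> :: real \<Rightarrow> (real^'n) \<times> (real^'n).
           \<phi> \<in> measurable (restrict_space lebesgue {0..1}) borel \<and>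
           \<phi> ` {0..1} \<subseteq> Omega \<and>
           distr unif01 borel \<phi> = \<mu>
           \<longrightarrow> \<not> sectionally_BV (\<lambda>u v. K (\<phi> u) (\<phi> v))"
proof (intro allI impI)
  fix \<phi> :: "real \<Rightarrow> (real^'n) \<times> (real^'n)"
  assume A: "\<phi> \<in> measurable (restrict_space lebesgue {0..1}) borel \<and>
           \<phi> ` {0..1} \<subseteq> Omega \<and> distr unif01 borel \<phi> = \<mu>"
  then have phi: "\<phi> \<in> measurable (restrict_space lebesgue {0..1}) borel"
    and dist: "distr unif01 borel \<phi> = \<mu>" by auto
  have setsmu: "sets \<mu> = sets borel" using mu_def sets_rho by simp
  have spmu: "space \<mu> = UNIV" using sets_eq_imp_space_eq[OF setsmu] by simp
  have sndb: "snd \<in> borel_measurable (borel :: ((real^'n) \<times> (real^'n)) measure)"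
    by (rule borel_measurable_continuous_onI) (rule continuous_on_snd[OF continuous_on_id, unfolded id_def])
  have fstb: "fst \<in> borel_measurable (borel :: ((real^'n) \<times> (real^'n)) measure)"
    by (rule borel_measurable_continuous_onI) (rule continuous_on_fst[OF continuous_on_id, unfolded id_def])
  have sndm: "snd \<in> borel_measurable \<mu>" using sndb by (subst measurable_cong_sets[OF setsmu refl])
  have fstm: "fst \<in> borel_measurable \<mu>" using fstb by (subst measurable_cong_sets[OF setsmu refl])
  show "\<not> sectionally_BV (\<lambda>u v. K (\<phi> u) (\<phi> v))"
  proof
    assume sbv: "sectionally_BV (\<lambda>u v. K (\<phi> u) (\<phi> v))"
    have ae1: "AE v in lebesgue. v \<in> {0..1} \<longrightarrow> BV01 (\<lambda>u. fst (\<phi> u) \<bullet> snd (\<phi> v))"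
      using sbv unfolding sectionally_BV_def K_def by simp
    have ae2: "AE u in lebesgue. u \<in> {0..1} \<longrightarrow> BV01 (\<lambda>v. fst (\<phi> u) \<bullet> snd (\<phi> v))"
      using sbv unfolding sectionally_BV_def K_def by simp
    define R where "R = snd ` \<phi> ` {v\<in>{0..1}. BV01 (\<lambda>u. fst (\<phi> u) \<bullet> snd (\<phi> v))}"
    have spanR: "span R = UNIV"
    proof (rule ccontr)
      assume ne: "span R \<noteq> UNIV"
      have sub: "subspace (span R)" by (rule subspace_span)
      have cl: "closed (span R)" by (rule closed_subspace[OF sub])
      then have Cb: "UNIV - span R \<in> sets borel" by auto
      have Xb: "snd -` (UNIV - span R) \<in> sets (borel :: ((real^'n) \<times> (real^'n)) measure)"
        using measurable_sets[OF sndb Cb] by simp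
      have "emeasure \<mu> (snd -` (UNIV - span R)) = 0"
        by (rule null_from_AE[OF phi dist ae1 Xb]) (auto simp: R_def intro: span_base)
      then have "supported_on (distr \<mu> borel snd) (span R)"
        unfolding supported_on_def using emeasure_distr[OF sndm Cb] spmu by simp
      with red_full sub ne show False by blast
    qed
    have gBV: "BV01 (\<lambda>u. fst (\<phi> u) \<bullet> w)" for w
    proof -
      have "R \<subseteq> {w. BV01 (\<lambda>u. fst (\<phi> u) \<bullet> w)}" unfolding R_def by auto
      then have "span R \<subseteq> {w. BV01 (\<lambda>u. fst (\<phi> u) \<bullet> w)}"
        by (rule span_minimal[OF _ BV_subspace1])
      then show ?thesis using spanR by auto
    qed
    define G where "G = fst ` \<phi> ` {u\<in>{0..1}. BV01 (\<lambda>v. fst (\<phi> u) \<bullet> snd (\<phi> v))}"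
    have spanG: "span G = UNIV"
    proof (rule ccontr)
      assume ne: "span G \<noteq> UNIV"
      have sub: "subspace (span G)" by (rule subspace_span)
      have cl: "closed (span G)" by (rule closed_subspace[OF sub])
      then have Cb: "UNIV - span G \<in> sets borel" by auto
      have Xb: "fst -` (UNIV - span G) \<in> sets (borel :: ((real^'n) \<times> (real^'n)) measure)"
        using measurable_sets[OF fstb Cb] by simp
      have "emeasure \<mu> (fst -` (UNIV - span G)) = 0"
        by (rule null_from_AE[OF phi dist ae2 Xb]) (auto simp: G_def intro: span_base)
      then have "supported_on (distr \<mu> borel fst) (span G)"
        unfolding supported_on_def using emeasure_distr[OF fstm Cb] spmu by simp
      with green_full sub ne show False by blast
    qed
    have rBV: "BV01 (\<lambda>v. w \<bullet> snd (\<phi> v))" for w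
    proof -
      have "G \<subseteq> {w. BV01 (\<lambda>v. w \<bullet> snd (\<phi> v))}" unfolding G_def by auto
      then have "span G \<subseteq> {w. BV01 (\<lambda>v. w \<bullet> snd (\<phi> v))}"
        by (rule span_minimal[OF _ BV_subspace2])
      then show ?thesis using spanG by auto
    qed
    have bvall: "\<forall>b\<in>Basis. BV01 (\<lambda>u. \<phi> u \<bullet> b)"
    proof
      fix b :: "(real^'n) \<times> (real^'n)" assume "b \<in> Basis"
      then consider c where "b = (c, 0)" | c where "b = (0, c)" unfolding Basis_prod_def by blast
      then show "BV01 (\<lambda>u. \<phi> u \<bullet> b)"
      proof cases
        case 1 then show ?thesis using gBV[of c] by (simp add: inner_prod_def)
      next
        case 2 then show ?thesis using rBV[of c] by (simp add: inner_prod_def inner_commute)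
      qed
    qed
    have dim: "2 \<le> DIM((real^'n)\<times>(real^'n))"
    proof -
      have "0 < CARD('n)" by (rule zero_less_card_finite)
      then show ?thesis unfolding DIM_prod DIM_cart DIM_real by linarith
    qed
    have "negligible (\<phi> ` {0..1})" by (rule BV_image_negligible[OF dim bvall])
    then have "\<phi> ` {0..1} \<in> null_sets (completion lborel)" by (simp only: negligible_iff_null_sets)
    then have "\<exists>N'\<in>null_sets lborel. \<phi> ` {0..1} \<subseteq> N'" by (simp only: null_sets_completion_iff2)
    then obtain N where N: "N \<in> null_sets lborel" "\<phi> ` {0..1} \<subseteq> N" by blast
    have ac: "null_sets lborel \<subseteq> null_sets \<mu>" using abs_cont unfolding absolutely_continuous_def .
    have "N \<in> null_sets \<mu>" using ac N(1) by (rule subsetD)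
    then have z: "emeasure \<mu> N = 0" by (rule null_setsD1)
    have "N \<in> sets lborel" using N(1) by (rule null_setsD2)
    then have Nb: "N \<in> sets (borel :: ((real^'n) \<times> (real^'n)) measure)" by simp
    have phi': "\<phi> \<in> measurable unif01 borel"
      using phi unfolding unif01_def
      by (subst measurable_cong_sets[OF sets_uniform_measure refl])
    have sp: "space unif01 = {0..1}" unfolding unif01_def by (simp add: space_restrict_space)
    have "emeasure \<mu> N = emeasure unif01 (\<phi> -` N \<inter> {0..1})"
      using dist[symmetric] emeasure_distr[OF phi' Nb] sp by simp
    also have "\<phi> -` N \<inter> {0..1} = {0..1}" using N(2) by auto
    also have "emeasure unif01 {0..1} = 1"
      unfolding unif01_def
      by (rule emeasure_uniform_measure_1) (simp_all add: emeasure_restrict_space)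
    finally show False using z by simp
  qed
qed

end
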